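(* Let $A\in\mathbb R^{m\times N}$, let $\mathcal B=(\mathcal B_1,\dots,\mathcal B_B)$ be a block structure with weights $\omega=(\omega_1,\dots,\omega_B)$, $\omega_i\ge1$. Let $s\ge2\|\omega\|_\infty^2$ and assume $A$ satisfies the WBRIP of order $2s$ with constant $\delta_{2s}<\frac{1}{2\sqrt2+1}$. For $x\in\mathbb R^N$ let $y=Ax+e$ with $\|e\|_2\le\eta$, and let $$\hat x\in\arg\min_{z\in\mathbb R^N}\|z\|_{2,1}^{(\omega)}\quad\text{s.t. }\|Az-y\|_2\le\eta.$$ Then $$\|x-\hat x\|_{2,1}^{(\omega)}\le c_\delta\,\sigma_s(x)_{2,1}^{(\omega)}+d_\delta\sqrt s\,\eta,\qquad \|x-\hat x\|_2\le\frac{c_\delta}{\sqrt s}\sigma_s(x)_{2,1}^{(\omega)}+d_\delta\eta,$$ where $c_\delta=\frac{2(1+\delta_{2s}(2\sqrt2-3))^2}{(1-\delta_{2s})(1-\delta_{2s}(2\sqrt2+1))}$ and $d_\delta=\frac{2(3+\delta_{2s}(2\sqrt2-3))\sqrt{1+\delta_{2s}}}{(1-\delta_{2s})(1-\delta_{2s}(2\sqrt2+1))}$.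
   Context: Block structure: $\mathcal B=(\mathcal B_1,\dots,\mathcal B_B)$ partition of $\{1,\dots,N\}$; $x[b]=x[\mathcal B_b]$. Weights $\omega_b\ge1$, $\|\omega\|_\infty=\max_b\omega_b$, $\omega(S)=\sum_{b\in S}\omega_b^2$. $\|x\|_{2,p}^{(\omega)}=\big(\sum_b\omega_b^{2-p}\|x[b]\|_2^p\big)^{1/p}$. $\|x\|_0^{(\omega)}=\omega(\{b:x[b]\ne0\})$. $\sigma_s(x)_{2,1}^{(\omega)}=\inf\{\|x-z\|_{2,1}^{(\omega)}:\|z\|_0^{(\omega)}\le s\}$. Definition (WBRIP): $A$ satisfies the weighted block restricted isometry property of order $t\ge\|\omega\|_\infty$ with constant $\delta\in(0,1)$ if $(1-\delta)\|x\|_2^2\le\|Ax\|_2^2\le(1+\delta)\|x\|_2^2$ for all $x$ with $\|x\|_0^{(\omega)}\le t$; the smallest such $\delta$ is denoted $\delta_t$. *)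

theory Defs
  imports "HOL-Analysis.Analysis"
begin

text \<open>Vectors in R^N are rendered as real^'n (index type 'n, N = CARD('n));
 a block structure is a family Bl :: 'b \<Rightarrow> 'n set indexed by a finite type 'b
 (B = CARD('b)) of nonempty, pairwise disjoint sets covering all indices.\<close>

definition block_structure :: "('b::finite \<Rightarrow> 'n::finite set) \<Rightarrow> bool" where
  "block_structure Bl \<longleftrightarrow> (\<forall>b. Bl b \<noteq> {}) \<and>
     (\<forall>b c. b \<noteq> c \<longrightarrow> Bl b \<inter> Bl c = {}) \<and> (\<Union>b. Bl b) = UNIV"

definition block_norm :: "('b \<Rightarrow> 'n::finite set) \<Rightarrow> real^'n \<Rightarrow> 'b \<Rightarrow> real" where
  "block_norm Bl x b = sqrt (\<Sum>i\<in>Bl b. (x $ i)^2)"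

text \<open>Weighted mixed norm with p = 1: sum of omega_b^(2-1) * ||x[b]||_2.\<close>
definition wnorm21 :: "('b::finite \<Rightarrow> 'n::finite set) \<Rightarrow> ('b \<Rightarrow> real) \<Rightarrow> real^'n \<Rightarrow> real" where
  "wnorm21 Bl w x = (\<Sum>b\<in>UNIV. w b powr (2 - 1) * block_norm Bl x b)"

definition wsupp_size :: "('b::finite \<Rightarrow> 'n::finite set) \<Rightarrow> ('b \<Rightarrow> real) \<Rightarrow> real^'n \<Rightarrow> real" where
  "wsupp_size Bl w x = (\<Sum>b\<in>{b. \<exists>i\<in>Bl b. x $ i \<noteq> 0}. (w b)^2)"

definition winf :: "('b::finite \<Rightarrow> real) \<Rightarrow> real" where
  "winf w = Max (range w)"

definition sigma_w :: "('b::finite \<Rightarrow> 'n::finite set) \<Rightarrow> ('b \<Rightarrow> real) \<Rightarrow> real \<Rightarrow> real^'n \<Rightarrow> real" where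
  "sigma_w Bl w s x = Inf {wnorm21 Bl w (x - z) | z. wsupp_size Bl w z \<le> s}"

definition rip_ineq :: "('b::finite \<Rightarrow> 'n::finite set) \<Rightarrow> ('b \<Rightarrow> real) \<Rightarrow> real^'n^'m \<Rightarrow> real \<Rightarrow> real \<Rightarrow> bool" where
  "rip_ineq Bl w A t \<delta> \<longleftrightarrow> (\<forall>x. wsupp_size Bl w x \<le> t \<longrightarrow>
      (1 - \<delta>) * (norm x)^2 \<le> (norm (A *v x))^2 \<and> (norm (A *v x))^2 \<le> (1 + \<delta>) * (norm x)^2)"

definition wbrip :: "('b::finite \<Rightarrow> 'n::finite set) \<Rightarrow> ('b \<Rightarrow> real) \<Rightarrow> real^'n^'m \<Rightarrow> real \<Rightarrow> bool" where
  "wbrip Bl w A t \<longleftrightarrow> t \<ge> winf w \<and> (\<exists>\<delta>. 0 < \<delta> \<and> \<delta> < 1 \<and> rip_ineq Bl w A t \<delta>)"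

definition wbrip_const :: "('b::finite \<Rightarrow> 'n::finite set) \<Rightarrow> ('b \<Rightarrow> real) \<Rightarrow> real^'n^'m \<Rightarrow> real \<Rightarrow> real" where
  "wbrip_const Bl w A t = Inf {\<delta>. 0 \<le> \<delta> \<and> rip_ineq Bl w A t \<delta>}"

end

theory Submission
  imports Defs
begin

definition rest :: "('b \<Rightarrow> 'n set) \<Rightarrow> 'b set \<Rightarrow> real^'n \<Rightarrow> real^'n" where
  "rest Bl K v = (\<chi> i. if (\<exists>b\<in>K. i \<in> Bl b) then v$i else 0)"

definition om :: "('b \<Rightarrow> real) \<Rightarrow> 'b set \<Rightarrow> real" where
  "om w K = (\<Sum>b\<in>K. (w b)^2)"

locale blk =
  fixes Bl :: "'b::finite \<Rightarrow> 'n::finite set" and w :: "'b \<Rightarrow> real"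
  assumes bs: "block_structure Bl" and wge: "\<forall>b. w b \<ge> 1"
begin

lemma disj: "b \<noteq> c \<Longrightarrow> Bl b \<inter> Bl c = {}" using bs unfolding block_structure_def by blast
lemma cover: "\<exists>b. i \<in> Bl b" using bs unfolding block_structure_def by blast

lemma uniq: "i \<in> Bl b \<Longrightarrow> i \<in> Bl c \<Longrightarrow> b = c" using disj by blast

lemma mem_iff: "i \<in> Bl b \<Longrightarrow> (\<exists>c\<in>K. i \<in> Bl c) \<longleftrightarrow> b \<in> K"
  using uniq by blast

lemma wpos: "w b > 0" using wge by (smt (verit))

lemma bn_nonneg: "block_norm Bl v b \<ge> 0" unfolding block_norm_def by (simp add: sum_nonneg)

lemma bn_sq: "(block_norm Bl v b)^2 = (\<Sum>i\<in>Bl b. (v$i)^2)"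
  unfolding block_norm_def using sum_nonneg[of "Bl b" "\<lambda>i. (v$i)^2"] by simp

lemma bn_rest: "block_norm Bl (rest Bl K v) b = (if b\<in>K then block_norm Bl v b else 0)"
proof -
  have "(\<Sum>i\<in>Bl b. ((rest Bl K v)$i)^2) = (\<Sum>i\<in>Bl b. (if b \<in> K then (v$i)^2 else 0))"
    by (rule sum.cong) (auto simp: rest_def mem_iff)
  then show ?thesis unfolding block_norm_def by auto
qed

lemma sum_blocks: "(\<Sum>i\<in>UNIV. g i) = (\<Sum>b\<in>UNIV. (\<Sum>i\<in>Bl b. g i))"
proof -
  have U: "(UNIV::'n set) = \<Union>(Bl ` UNIV)" using cover by blast
  have "(\<Sum>i\<in>\<Union>(Bl ` UNIV). g i) = (\<Sum>b\<in>UNIV. (\<Sum>i\<in>Bl b. g i))"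
    by (rule sum.UNION_disjoint) (auto dest: disj)
  then show ?thesis using U by simp
qed

lemma norm_sq: "(norm v)^2 = (\<Sum>b\<in>UNIV. (block_norm Bl v b)^2)"
proof -
  have "(norm v)^2 = (\<Sum>i\<in>UNIV. (v$i)^2)"
    unfolding norm_vec_def L2_set_def by (simp add: sum_nonneg)
  also have "\<dots> = (\<Sum>b\<in>UNIV. (block_norm Bl v b)^2)"
    unfolding sum_blocks bn_sq ..
  finally show ?thesis .
qed

lemma norm_rest_sq: "(norm (rest Bl K v))^2 = (\<Sum>b\<in>K. (block_norm Bl v b)^2)"
proof -
  have "(\<Sum>b\<in>UNIV. (if b \<in> K then block_norm Bl v b else 0)^2) = (\<Sum>b\<in>UNIV. if b \<in> K then (block_norm Bl v b)^2 else 0)"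
    by (rule sum.cong) auto
  also have "\<dots> = (\<Sum>b\<in>K. (block_norm Bl v b)^2)" by (simp add: sum.If_cases)
  finally show ?thesis unfolding norm_sq bn_rest .
qed

lemma wnorm21_eq: "wnorm21 Bl w v = (\<Sum>b\<in>UNIV. w b * block_norm Bl v b)"
  unfolding wnorm21_def using wpos by (simp add: less_imp_le)

lemma wnorm21_rest: "wnorm21 Bl w (rest Bl K v) = (\<Sum>b\<in>K. w b * block_norm Bl v b)"
  unfolding wnorm21_eq bn_rest by (simp add: sum.If_cases if_distrib)

lemma wsupp_rest: "wsupp_size Bl w (rest Bl K v) \<le> om w K"
  unfolding wsupp_size_def om_def
proof (rule sum_mono2)
  show "{b. \<exists>i\<in>Bl b. rest Bl K v $ i \<noteq> 0} \<subseteq> K"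
    by (auto simp: rest_def mem_iff split: if_splits)
qed auto

lemma rest_add: "K1 \<inter> K2 = {} \<Longrightarrow> rest Bl K1 v + rest Bl K2 v = rest Bl (K1 \<union> K2) v"
  unfolding rest_def by (rule vec_eq_iff[THEN iffD2]) (auto dest: uniq)

lemma rest_UNIV: "rest Bl UNIV v = v"
  unfolding rest_def by (rule vec_eq_iff[THEN iffD2]) (auto simp: cover)

lemma rest_empty: "rest Bl {} v = 0"
  unfolding rest_def by (rule vec_eq_iff[THEN iffD2]) auto

lemma rest_sum: "finite J \<Longrightarrow> (\<forall>i\<in>J. \<forall>j\<in>J. i \<noteq> j \<longrightarrow> g i \<inter> g j = {}) \<Longrightarrow>
   (\<Sum>j\<in>J. rest Bl (g j) v) = rest Bl (\<Union>j\<in>J. g j) v"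
proof (induction J rule: finite_induct)
  case empty then show ?case by (simp add: rest_empty)
next
  case (insert a J)
  have "(\<Sum>j\<in>insert a J. rest Bl (g j) v) = rest Bl (g a) v + rest Bl (\<Union>j\<in>J. g j) v"
    using insert by simp
  also have "\<dots> = rest Bl (\<Union>j\<in>insert a J. g j) v"
    by (subst rest_add) (use insert in auto)
  finally show ?case .
qed

lemma bn_triangle: "block_norm Bl (x + y) b \<le> block_norm Bl x b + block_norm Bl y b"
  unfolding block_norm_def using L2_set_triangle_ineq[of "\<lambda>i. x$i" "\<lambda>i. y$i" "Bl b"]
  unfolding L2_set_def by simp

lemma bn_minus: "block_norm Bl (- x) b = block_norm Bl x b"
  unfolding block_norm_def by simp

end

lemma rip_set:
  assumes "wbrip Bl w A t"
  shows "{d. 0 \<le> d \<and> rip_ineq Bl w A t d} \<noteq> {}" "bdd_below {d. 0 \<le> d \<and> rip_ineq Bl w A t d}"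
  using assms unfolding wbrip_def by (auto intro: less_imp_le)[1] (rule bdd_belowI[of _ 0], simp)

lemma wbrip_const_nonneg: assumes "wbrip Bl w A t" shows "wbrip_const Bl w A t \<ge> 0"
  unfolding wbrip_const_def using rip_set[OF assms] by (intro cInf_greatest) auto

lemma rip_inf:
  assumes "wbrip Bl w A t" and "wsupp_size Bl w x \<le> t"
  shows "(1 - wbrip_const Bl w A t) * (norm x)^2 \<le> (norm (A *v x))^2 \<and>
         (norm (A *v x))^2 \<le> (1 + wbrip_const Bl w A t) * (norm x)^2"
proof (cases "x = 0")
  case True then show ?thesis by simp
next
  case False
  let ?D = "{d. 0 \<le> d \<and> rip_ineq Bl w A t d}"
  have nx: "(norm x)^2 > 0" using False by simp
  have h1: "((norm x)^2 - (norm (A *v x))^2) / (norm x)^2 \<le> wbrip_const Bl w A t"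
    unfolding wbrip_const_def
  proof (rule cInf_greatest)
    show "?D \<noteq> {}" using rip_set[OF assms(1)] by blast
    fix d assume "d \<in> ?D"
    then have "(1 - d) * (norm x)^2 \<le> (norm (A *v x))^2" using assms(2) unfolding rip_ineq_def by blast
    then show "((norm x)^2 - (norm (A *v x))^2) / (norm x)^2 \<le> d"
      using nx by (simp add: divide_le_eq algebra_simps)
  qed
  have h2: "((norm (A *v x))^2 - (norm x)^2) / (norm x)^2 \<le> wbrip_const Bl w A t"
    unfolding wbrip_const_def
  proof (rule cInf_greatest)
    show "?D \<noteq> {}" using rip_set[OF assms(1)] by blast
    fix d assume "d \<in> ?D"
    then have "(norm (A *v x))^2 \<le> (1 + d) * (norm x)^2" using assms(2) unfolding rip_ineq_def by blast
    then show "((norm (A *v x))^2 - (norm x)^2) / (norm x)^2 \<le> d"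
      using nx by (simp add: divide_le_eq algebra_simps)
  qed
  show ?thesis using h1 h2 nx by (simp add: divide_le_eq algebra_simps)
qed

context blk begin

lemma rest_rest: "rest Bl K (rest Bl K' v) = rest Bl (K \<inter> K') v"
  unfolding rest_def by (rule vec_eq_iff[THEN iffD2]) (auto dest: uniq)

lemma rest_plus: "rest Bl K (a + b) = rest Bl K a + rest Bl K b"
  unfolding rest_def by (rule vec_eq_iff[THEN iffD2]) auto

lemma rest_minus: "rest Bl K (a - b) = rest Bl K a - rest Bl K b"
  unfolding rest_def by (rule vec_eq_iff[THEN iffD2]) auto

lemma rest_scale: "rest Bl K (c *\<^sub>R a) = c *\<^sub>R rest Bl K a"
  unfolding rest_def by (rule vec_eq_iff[THEN iffD2]) auto

lemma rest_orth: "K1 \<inter> K2 = {} \<Longrightarrow> inner (rest Bl K1 a) (rest Bl K2 b) = 0"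
  unfolding rest_def inner_vec_def apply (auto intro!: sum.neutral) using uniq by blast

lemma om_union: "om w (K1 \<union> K2) \<le> om w K1 + om w K2"
proof -
  have "om w (K1 \<union> K2) = om w K1 + om w K2 - om w (K1 \<inter> K2)"
    unfolding om_def by (simp add: sum_Un)
  moreover have "om w (K1 \<inter> K2) \<ge> 0" unfolding om_def by (simp add: sum_nonneg)
  ultimately show ?thesis by simp
qed

lemma om_nonneg: "om w K \<ge> 0" unfolding om_def by (simp add: sum_nonneg)

lemma inner_bound:
  fixes A :: "real^'n^'m"
  assumes rip: "wbrip Bl w A t" and dj: "K1 \<inter> K2 = {}" and sz: "om w (K1 \<union> K2) \<le> t"
  shows "\<bar>inner (A *v rest Bl K1 p) (A *v rest Bl K2 q)\<bar>
     \<le> wbrip_const Bl w A t * norm (rest Bl K1 p) * norm (rest Bl K2 q)"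
proof (cases "rest Bl K1 p = 0 \<or> rest Bl K2 q = 0")
  case True then show ?thesis by auto
next
  case False
  let ?d = "wbrip_const Bl w A t"
  define a where "a = norm (rest Bl K1 p)"
  define b where "b = norm (rest Bl K2 q)"
  have a0: "a > 0" and b0: "b > 0" using False unfolding a_def b_def by auto
  define u where "u = rest Bl K1 ((1/a) *\<^sub>R p)"
  define z where "z = rest Bl K2 ((1/b) *\<^sub>R q)"
  have nu: "norm u = 1" unfolding u_def rest_scale using a0 unfolding a_def by simp
  have nz: "norm z = 1" unfolding z_def rest_scale using b0 unfolding b_def by simp
  have orth: "inner u z = 0" unfolding u_def z_def using rest_orth[OF dj] by blast
  have yp: "u + z = rest Bl (K1 \<union> K2) (u + z)"
    unfolding u_def z_def rest_plus rest_rest by (simp add: Int_absorb1)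
  have ym: "u - z = rest Bl (K1 \<union> K2) (u - z)"
    unfolding u_def z_def rest_minus rest_rest by (simp add: Int_absorb1)
  have sp: "wsupp_size Bl w (u + z) \<le> t" using wsupp_rest[of "K1 \<union> K2" "u + z"] yp sz by simp
  have sm: "wsupp_size Bl w (u - z) \<le> t" using wsupp_rest[of "K1 \<union> K2" "u - z"] ym sz by simp
  have uu: "inner u u = 1" using nu by (metis power2_norm_eq_inner power_one)
  have zz: "inner z z = 1" using nz by (metis power2_norm_eq_inner power_one)
  have n2p: "(norm (u + z))^2 = 2" using uu zz orth
    by (simp add: power2_norm_eq_inner inner_add inner_commute)
  have n2m: "(norm (u - z))^2 = 2" using uu zz orth
    by (simp add: power2_norm_eq_inner inner_diff inner_commute)
  note r1 = rip_inf[OF rip sp]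
  note r2 = rip_inf[OF rip sm]
  have id: "(norm (A *v (u + z)))^2 - (norm (A *v (u - z)))^2 = 4 * inner (A *v u) (A *v z)"
    by (simp add: matrix_vector_right_distrib matrix_vector_mult_diff_distrib power2_norm_eq_inner
        inner_add inner_diff inner_commute)
  have iu: "\<bar>inner (A *v u) (A *v z)\<bar> \<le> ?d" using r1 r2 id n2p n2m by (simp add: abs_le_iff) 
  have "A *v rest Bl K1 p = a *\<^sub>R (A *v u)" unfolding u_def rest_scale matrix_vector_mult_scaleR
    using a0 by simp
  moreover have "A *v rest Bl K2 q = b *\<^sub>R (A *v z)" unfolding z_def rest_scale matrix_vector_mult_scaleR
    using b0 by simp
  ultimately have "\<bar>inner (A *v rest Bl K1 p) (A *v rest Bl K2 q)\<bar> = a * b * \<bar>inner (A *v u) (A *v z)\<bar>"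
    using a0 b0 by (simp add: abs_mult)
  also have "\<dots> \<le> a * b * ?d" using iu a0 b0 by simp
  finally show ?thesis unfolding a_def b_def by (simp add: algebra_simps)
qed

end

context blk begin

lemma s_ge2: assumes ws: "\<forall>b. (w b)^2 \<le> s/2" shows "s \<ge> 2"
proof -
  have "1 \<le> (w undefined)^2" using wge by (simp add: one_le_power)
  then show ?thesis using ws[rule_format, of undefined] by simp
qed

lemma chunk_step:
  fixes r :: "'b \<Rightarrow> real"
  assumes ws: "\<forall>b. (w b)^2 \<le> s/2" and big: "om w R > s"
  shows "\<exists>C\<subseteq>R. C \<noteq> {} \<and> om w C \<le> s \<and> om w C \<ge> s/2 \<and> (\<forall>b\<in>C. \<forall>c\<in>R-C. r c \<le> r b)"
proof -
  have s0: "s \<ge> 2" using s_ge2[OF ws] .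
  define F where "F = {C. C \<subseteq> R \<and> om w C \<le> s \<and> (\<forall>b\<in>C. \<forall>c\<in>R-C. r c \<le> r b)}"
  have finF: "finite F" unfolding F_def by simp
  have e: "{} \<in> F" unfolding F_def om_def using s0 by simp
  define M where "M = Max (om w ` F)"
  have "M \<in> om w ` F" unfolding M_def using finF e by (intro Max_in) auto
  then obtain C where C: "C \<in> F" "om w C = M" by auto
  have Cmax: "\<And>C'. C' \<in> F \<Longrightarrow> om w C' \<le> om w C" unfolding C(2) M_def using finF by simp
  have half: "om w C \<ge> s/2"
  proof (rule ccontr)
    assume lt: "\<not> om w C \<ge> s/2"
    have "R - C \<noteq> {}"
    proof
      assume "R - C = {}"
      then have "C = R" using C(1) unfolding F_def by auto
      then show False using C(1) big unfolding F_def by auto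
    qed
    define m where "m = Max (r ` (R - C))"
    have "m \<in> r ` (R - C)" unfolding m_def using \<open>R - C \<noteq> {}\<close> by (intro Max_in) auto
    then obtain c0 where c0: "c0 \<in> R - C" "r c0 = m" by auto
    have c0max: "\<And>c. c \<in> R - C \<Longrightarrow> r c \<le> r c0" unfolding c0(2) m_def by simp
    have omi: "om w (insert c0 C) = om w C + (w c0)^2" unfolding om_def using c0(1) by simp
    have "insert c0 C \<in> F" unfolding F_def
    proof (intro CollectI conjI)
      show "insert c0 C \<subseteq> R" using c0(1) C(1) unfolding F_def by auto
      show "om w (insert c0 C) \<le> s" using omi ws[rule_format, of c0] lt by simp
      show "\<forall>b\<in>insert c0 C. \<forall>c\<in>R - insert c0 C. r c \<le> r b"
        using C(1) c0max unfolding F_def by auto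
    qed
    then have "om w (insert c0 C) \<le> om w C" by (rule Cmax)
    then show False using omi wpos[of c0] by simp
  qed
  have "C \<noteq> {}" using half s0 unfolding om_def by auto
  then show ?thesis using C(1) half unfolding F_def by blast
qed

definition chunked where "chunked s r R f k \<longleftrightarrow> k \<ge> 1 \<and> (\<forall>j. om w (f j) \<le> s) \<and> (\<forall>j\<ge>k. f j = {}) \<and>
     (\<forall>i j. i \<noteq> j \<longrightarrow> f i \<inter> f j = {}) \<and> (\<Union>j<k. f j) = R \<and>
     (\<forall>i j. i < j \<longrightarrow> (\<forall>b\<in>f i. \<forall>c\<in>f j. (r c::real) \<le> r b)) \<and>
     (\<forall>j. f (Suc j) \<noteq> {} \<longrightarrow> om w (f j) \<ge> s/2)"

lemma chunks:
  fixes r :: "'b \<Rightarrow> real"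
  assumes ws: "\<forall>b. (w b)^2 \<le> s/2"
  shows "\<exists>f k. chunked s r R f k"
proof (induction "card R" arbitrary: R rule: less_induct)
  case less
  have s0: "s \<ge> 2" using s_ge2[OF ws] .
  show ?case
  proof (cases "om w R \<le> s")
    case True
    define g where "g j = (if j = 0 then R else {})" for j :: nat
    show ?thesis
    proof (rule exI[of _ g], rule exI[of _ 1], unfold chunked_def, intro conjI allI impI)
      fix j show "om w (g j) \<le> s" using True s0 by (simp add: g_def om_def)
    next
      fix j :: nat assume "1 \<le> j" then show "g j = {}" by (simp add: g_def)
    next
      fix i j :: nat assume "i \<noteq> j" then show "g i \<inter> g j = {}" by (simp add: g_def)
    next
      show "(\<Union>j<1. g j) = R"
      proof
        show "(\<Union>j<1. g j) \<subseteq> R" unfolding g_def by auto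
        show "R \<subseteq> (\<Union>j<1. g j)" unfolding g_def by force
      qed
    next
      fix i j :: nat assume "i < j" then show "\<forall>b\<in>g i. \<forall>c\<in>g j. r c \<le> r b" by (simp add: g_def)
    next
      fix j assume "g (Suc j) \<noteq> {}" then show "s / 2 \<le> om w (g j)" by (simp add: g_def)
    qed simp
  next
    case False
    then obtain C where C: "C \<subseteq> R" "C \<noteq> {}" "om w C \<le> s" "om w C \<ge> s/2"
      "\<forall>b\<in>C. \<forall>c\<in>R-C. r c \<le> r b"
      using chunk_step[OF ws, of R r] by auto
    have ps: "R - C \<subset> R" using C(1,2) by auto
    have "card (R - C) < card R" by (rule psubset_card_mono[OF _ ps]) simp
    note ih = less(1)[OF this]
    obtain f k where fk: "chunked s r (R - C) f k" using ih by blast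
    have f: "k \<ge> 1" "\<forall>j. om w (f j) \<le> s" "\<forall>j\<ge>k. f j = {}"
      "\<forall>i j. i \<noteq> j \<longrightarrow> f i \<inter> f j = {}" "(\<Union>j<k. f j) = R - C"
      "\<forall>i j. i < j \<longrightarrow> (\<forall>b\<in>f i. \<forall>c\<in>f j. r c \<le> r b)"
      "\<forall>j. f (Suc j) \<noteq> {} \<longrightarrow> om w (f j) \<ge> s/2" using fk unfolding chunked_def by simp_all
    have fsub: "f j \<subseteq> R - C" for j
    proof (cases "j < k")
      case True then have "f j \<subseteq> (\<Union>j<k. f j)" by blast
      then show ?thesis using f(5) by simp
    next
      case False then show ?thesis using f(3) by simp
    qed
    define g where "g j = (case j of 0 \<Rightarrow> C | Suc j' \<Rightarrow> f j')" for j
    have g0: "g 0 = C" and gS: "g (Suc j) = f j" for j unfolding g_def by auto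
    show ?thesis
    proof (rule exI[of _ g], rule exI[of _ "Suc k"], unfold chunked_def, intro conjI allI impI)
      show "1 \<le> Suc k" by simp
      fix j show "om w (g j) \<le> s"
      proof (cases j)
        case 0 then show ?thesis using C(3) g0 by simp
      next
        case (Suc j') then show ?thesis using f(2) gS by simp
      qed
    next
      fix j assume j: "Suc k \<le> j"
      then obtain j' where "j = Suc j'" "k \<le> j'" by (cases j) auto
      then show "g j = {}" using f(3) gS by simp
    next
      fix i j :: nat assume ij: "i \<noteq> j"
      show "g i \<inter> g j = {}"
      proof (cases i)
        case 0
        then obtain j' where "j = Suc j'" using ij by (cases j) auto
        then show ?thesis using 0 g0 gS fsub[of j'] by auto
      next
        case (Suc i')
        show ?thesis
        proof (cases j)
          case 0 then show ?thesis using Suc g0 gS fsub[of i'] by auto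
        next
          case (Suc j') then show ?thesis using \<open>i = Suc i'\<close> ij f(4) gS by simp
        qed
      qed
    next
      have "(\<Union>j<Suc k. g j) = g 0 \<union> (\<Union>j<k. g (Suc j))"
        by (simp add: lessThan_Suc_eq_insert_0 UN_insert image_image del: lessThan_Suc)
      also have "\<dots> = C \<union> (R - C)" using f(5) by (simp add: g0 gS)
      also have "\<dots> = R" using C(1) by auto
      finally show "(\<Union>j<Suc k. g j) = R" .
    next
      fix i j :: nat assume ij: "i < j"
      then obtain j' where j': "j = Suc j'" by (cases j) auto
      show "\<forall>b\<in>g i. \<forall>c\<in>g j. r c \<le> r b"
      proof (cases i)
        case 0
        then show ?thesis using C(5) fsub[of j'] g0 gS j' by blast
      next
        case (Suc i')
        then have "i' < j'" using ij j' by simp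
        then show ?thesis using f(6) Suc j' gS by simp
      qed
    next
      fix j assume gj: "g (Suc j) \<noteq> {}"
      show "s / 2 \<le> om w (g j)"
      proof (cases j)
        case 0 then show ?thesis using C(4) g0 by simp
      next
        case (Suc j') then show ?thesis using f(7) gj gS by simp
      qed
    qed
  qed
qed
end

lemma evenodd:
  fixes P :: "nat \<Rightarrow> real"
  assumes "\<forall>j. P j \<ge> 0"
  shows "(\<Sum>j<n. P j * P (Suc j)) \<le> (\<Sum>j\<le>n. P j)^2 / 4"
proof -
  define E where "E n = (\<Sum>j\<le>n. if even j then P j else 0)" for n
  define Od where "Od n = (\<Sum>j\<le>n. if odd j then P j else 0)" for n
  have EO: "E n + Od n = (\<Sum>j\<le>n. P j)" for n
    unfolding E_def Od_def sum.distrib[symmetric] by (rule sum.cong) auto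
  have Eg: "P j \<le> E n" if "j \<le> n" "even j" for j n
  proof -
    have "(if even j then P j else 0) \<le> E n" unfolding E_def
      by (rule member_le_sum) (use that assms in auto)
    then show ?thesis using that by simp
  qed
  have Og: "P j \<le> Od n" if "j \<le> n" "odd j" for j n
  proof -
    have "(if odd j then P j else 0) \<le> Od n" unfolding Od_def
      by (rule member_le_sum) (use that assms in auto)
    then show ?thesis using that by simp
  qed
  have E0: "E n \<ge> 0" "Od n \<ge> 0" for n unfolding E_def Od_def using assms by (auto intro!: sum_nonneg)
  have main: "(\<Sum>j<n. P j * P (Suc j)) \<le> E n * Od n" for n
  proof (induction n)
    case 0 then show ?case using E0 by simp
  next
    case (Suc n)
    show ?case
    proof (cases "even n")
      case True
      have eS: "E (Suc n) = E n" "Od (Suc n) = Od n + P (Suc n)" using True unfolding E_def Od_def by auto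
      have "P n * P (Suc n) \<le> E n * P (Suc n)" using Eg[of n n] True assms by (simp add: mult_right_mono)
      then show ?thesis using Suc.IH unfolding eS by (simp add: algebra_simps)
    next
      case False
      have eS: "E (Suc n) = E n + P (Suc n)" "Od (Suc n) = Od n" using False unfolding E_def Od_def by auto
      have "P n * P (Suc n) \<le> Od n * P (Suc n)" using Og[of n n] False assms by (simp add: mult_right_mono)
      then show ?thesis using Suc.IH unfolding eS by (simp add: algebra_simps)
    qed
  qed
  have "E n * Od n \<le> (E n + Od n)^2 / 4"
  proof -
    have "0 \<le> (E n - Od n)^2" by simp
    then show ?thesis by (simp add: power2_eq_square algebra_simps)
  qed
  then show ?thesis using main[of n] EO[of n] by simp
qed

context blk begin

lemma pair:
  assumes "\<forall>b\<in>C. \<forall>c\<in>D. block_norm Bl v c / w c \<le> block_norm Bl v b / w b"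
  shows "(norm (rest Bl D v))^2 * om w C \<le> (\<Sum>b\<in>C. w b * block_norm Bl v b) * (\<Sum>c\<in>D. w c * block_norm Bl v c)"
proof -
  have "(norm (rest Bl D v))^2 * om w C = (\<Sum>c\<in>D. \<Sum>b\<in>C. (block_norm Bl v c)^2 * (w b)^2)"
    unfolding norm_rest_sq om_def sum_product ..
  also have "\<dots> \<le> (\<Sum>c\<in>D. \<Sum>b\<in>C. (w b * block_norm Bl v b) * (w c * block_norm Bl v c))"
  proof (intro sum_mono)
    fix c b assume c: "c \<in> D" and b: "b \<in> C"
    define rb where "rb = block_norm Bl v b / w b"
    define rc where "rc = block_norm Bl v c / w c"
    have wb: "w b > 0" and wc: "w c > 0" using wpos by auto
    have bb: "block_norm Bl v b = w b * rb" and cc: "block_norm Bl v c = w c * rc"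
      unfolding rb_def rc_def using wb wc by auto
    have rc0: "rc \<ge> 0" unfolding rc_def using bn_nonneg wc by simp
    have "rc \<le> rb" using assms b c unfolding rb_def rc_def by blast
    then have "rc * rc \<le> rb * rc" using rc0 by (simp add: mult_right_mono)
    then have "(w b)^2 * (w c)^2 * (rc * rc) \<le> (w b)^2 * (w c)^2 * (rb * rc)"
      by (simp add: mult_left_mono)
    then show "(block_norm Bl v c)^2 * (w b)^2 \<le> (w b * block_norm Bl v b) * (w c * block_norm Bl v c)"
      unfolding bb cc by (simp add: power2_eq_square algebra_simps)
  qed
  also have "\<dots> = (\<Sum>b\<in>C. w b * block_norm Bl v b) * (\<Sum>c\<in>D. w c * block_norm Bl v c)"
    unfolding sum_product by (rule sum.swap)
  finally show ?thesis .
qed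

lemma P_nonneg: "(\<Sum>b\<in>X. w b * block_norm Bl v b) \<ge> 0"
  using wpos bn_nonneg by (intro sum_nonneg) (simp add: less_imp_le)

lemma tail:
  assumes s2: "s \<ge> 2" and
    f: "k \<ge> 1" "\<forall>j. om w (f j) \<le> s" "\<forall>j\<ge>k. f j = {}"
      "\<forall>i j. i \<noteq> j \<longrightarrow> f i \<inter> f j = {}" "(\<Union>j<k. f j) = R"
      "\<forall>i j. i < j \<longrightarrow> (\<forall>b\<in>f i. \<forall>c\<in>f j. block_norm Bl v c / w c \<le> block_norm Bl v b / w b)"
      "\<forall>j. f (Suc j) \<noteq> {} \<longrightarrow> om w (f j) \<ge> s/2"
  defines "L \<equiv> (\<Sum>b\<in>R. w b * block_norm Bl v b)"
  shows "(\<Sum>j<k. norm (rest Bl (f (Suc j)) v)) \<le> sqrt 2 * L / sqrt s"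
    and "(norm (rest Bl (R - f 0) v))^2 \<le> L^2 / (2 * s)"
    and "R - f 0 = (\<Union>j<k. f (Suc j))"
proof -
  define p where "p j = (\<Sum>b\<in>f j. w b * block_norm Bl v b)" for j
  have p0: "p j \<ge> 0" for j unfolding p_def by (rule P_nonneg)
  have pk: "p k = 0" unfolding p_def using f(3) by simp
  have Lsum: "L = (\<Sum>j<k. p j)"
    unfolding L_def p_def f(5)[symmetric] by (rule sum.UNION_disjoint) (use f(4) in auto)
  have nsq: "(norm (rest Bl (f (Suc j)) v))^2 \<le> 2 * p j * p (Suc j) / s" for j
  proof (cases "f (Suc j) = {}")
    case True then show ?thesis using p0 s2 by (simp add: rest_empty)
  next
    case False
    have om: "om w (f j) \<ge> s/2" using f(7) False by blast
    have pr: "(norm (rest Bl (f (Suc j)) v))^2 * om w (f j) \<le> p j * p (Suc j)"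
      unfolding p_def by (rule pair) (use f(6) in auto)
    have "(norm (rest Bl (f (Suc j)) v))^2 * (s/2) \<le> (norm (rest Bl (f (Suc j)) v))^2 * om w (f j)"
      by (rule mult_left_mono[OF om]) simp
    then have "(norm (rest Bl (f (Suc j)) v))^2 * (s/2) \<le> p j * p (Suc j)" using pr by linarith
    then show ?thesis using s2 by (simp add: field_simps)
  qed
  have n1: "norm (rest Bl (f (Suc j)) v) \<le> (p j + p (Suc j)) / sqrt (2 * s)" for j
  proof (rule power2_le_imp_le)
    have "0 \<le> (p j - p (Suc j))^2" by simp
    then have "4 * (p j * p (Suc j)) \<le> (p j + p (Suc j))^2"
      by (simp add: power2_eq_square algebra_simps)
    then have "2 * p j * p (Suc j) / s \<le> ((p j + p (Suc j)) / sqrt (2 * s))^2"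
      using s2 by (simp add: power_divide field_simps)
    then show "(norm (rest Bl (f (Suc j)) v))^2 \<le> ((p j + p (Suc j)) / sqrt (2 * s))^2"
      using nsq[of j] by linarith
    show "0 \<le> (p j + p (Suc j)) / sqrt (2 * s)" using p0 s2 by simp
  qed
  have sh: "(\<Sum>j<k. p (Suc j)) \<le> L"
  proof -
    have "(\<Sum>j<Suc k. p j) = p 0 + (\<Sum>j<k. p (Suc j))" by (rule sum.lessThan_Suc_shift)
    moreover have "(\<Sum>j<Suc k. p j) = L" using pk Lsum by simp
    ultimately show ?thesis using p0[of 0] by linarith
  qed
  have "(\<Sum>j<k. norm (rest Bl (f (Suc j)) v)) \<le> (\<Sum>j<k. (p j + p (Suc j)) / sqrt (2 * s))"
    by (rule sum_mono) (rule n1)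
  also have "\<dots> = ((\<Sum>j<k. p j) + (\<Sum>j<k. p (Suc j))) / sqrt (2 * s)"
    unfolding sum_divide_distrib[symmetric] sum.distrib ..
  also have "\<dots> \<le> (2 * L) / sqrt (2 * s)" using sh Lsum s2 by (simp add: divide_right_mono)
  also have "\<dots> = sqrt 2 * L / sqrt s"
  proof -
    have "(2 * L) / sqrt (2 * s) = (2 / sqrt 2) * L / sqrt s" by (simp add: real_sqrt_mult)
    also have "2 / sqrt 2 = sqrt 2" by (rule real_div_sqrt) simp
    finally show ?thesis .
  qed
  finally show "(\<Sum>j<k. norm (rest Bl (f (Suc j)) v)) \<le> sqrt 2 * L / sqrt s" .
  show RU: "R - f 0 = (\<Union>j<k. f (Suc j))"
  proof
    show "R - f 0 \<subseteq> (\<Union>j<k. f (Suc j))"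
    proof
      fix x assume x: "x \<in> R - f 0"
      then obtain j where j: "j < k" "x \<in> f j" using f(5) by auto
      have "j \<noteq> 0" proof assume "j = 0" then show False using x j by simp qed
      then obtain j' where "j = Suc j'" using not0_implies_Suc by blast
      then show "x \<in> (\<Union>j<k. f (Suc j))" using j by auto
    qed
    show "(\<Union>j<k. f (Suc j)) \<subseteq> R - f 0"
    proof
      fix x assume "x \<in> (\<Union>j<k. f (Suc j))"
      then obtain j where j: "j < k" "x \<in> f (Suc j)" by auto
      have "Suc j < k"
      proof (rule ccontr)
        assume "\<not> Suc j < k"
        then have "f (Suc j) = {}" using f(3) by simp
        then show False using j by simp
      qed
      then have "x \<in> R" using j f(5) by auto
      moreover have "x \<notin> f 0" using j f(4)[rule_format, of 0 "Suc j"] by auto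
      ultimately show "x \<in> R - f 0" by simp
    qed
  qed
  have "(norm (rest Bl (R - f 0) v))^2 = (\<Sum>b\<in>(\<Union>j<k. f (Suc j)). (block_norm Bl v b)^2)"
    unfolding norm_rest_sq RU ..
  also have "\<dots> = (\<Sum>j<k. \<Sum>b\<in>f (Suc j). (block_norm Bl v b)^2)"
    by (rule sum.UNION_disjoint) (use f(4) in auto)
  also have "\<dots> = (\<Sum>j<k. (norm (rest Bl (f (Suc j)) v))^2)" unfolding norm_rest_sq ..
  also have "\<dots> \<le> (\<Sum>j<k. 2 * p j * p (Suc j) / s)" by (rule sum_mono) (rule nsq)
  also have "\<dots> = (2 / s) * (\<Sum>j<k. p j * p (Suc j))"
    by (simp add: sum_distrib_left field_simps)
  also have "\<dots> \<le> (2 / s) * ((\<Sum>j\<le>k. p j)^2 / 4)"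
    using evenodd[of p k] p0 s2 by (intro mult_left_mono) auto
  also have "(\<Sum>j\<le>k. p j) = L" using pk Lsum by (simp add: lessThan_Suc_atMost[symmetric])
  finally show "(norm (rest Bl (R - f 0) v))^2 \<le> L^2 / (2 * s)" by simp
qed

end

context blk begin

lemma nsp:
  fixes A :: "real^'n^'m" and v :: "real^'n"
  assumes ws: "\<forall>b. (w b)^2 \<le> s/2" and rip: "wbrip Bl w A (2 * s)" and T: "om w T \<le> s"
  defines "\<delta> \<equiv> wbrip_const Bl w A (2 * s)" and "L \<equiv> (\<Sum>b\<in>-T. w b * block_norm Bl v b)"
  shows "\<exists>S. S \<inter> T = {} \<and>
     (1 - \<delta>) * norm (rest Bl (T \<union> S) v) \<le> sqrt (1 + \<delta>) * norm (A *v v) + 2 * \<delta> * L / sqrt s \<and>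
     (norm (rest Bl (-T - S) v))^2 \<le> L^2 / (2 * s)"
proof -
  have s2: "s \<ge> 2" using s_ge2[OF ws] .
  have d0: "\<delta> \<ge> 0" unfolding \<delta>_def by (rule wbrip_const_nonneg[OF rip])
  obtain f k where fk: "chunked s (\<lambda>b. block_norm Bl v b / w b) (-T) f k"
    using chunks[OF ws, of "\<lambda>b. block_norm Bl v b / w b" "-T"] by blast
  have f: "k \<ge> 1" "\<forall>j. om w (f j) \<le> s" "\<forall>j\<ge>k. f j = {}"
      "\<forall>i j. i \<noteq> j \<longrightarrow> f i \<inter> f j = {}" "(\<Union>j<k. f j) = -T"
      "\<forall>i j. i < j \<longrightarrow> (\<forall>b\<in>f i. \<forall>c\<in>f j. block_norm Bl v c / w c \<le> block_norm Bl v b / w b)"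
      "\<forall>j. f (Suc j) \<noteq> {} \<longrightarrow> om w (f j) \<ge> s/2"
    using fk unfolding chunked_def by simp_all
  note tl = tail[OF s2 f, folded L_def]
  have fsub: "f j \<subseteq> -T" for j
  proof (cases "j < k")
    case True then have "f j \<subseteq> (\<Union>j<k. f j)" by blast
    then show ?thesis using f(5) by simp
  next
    case False then show ?thesis using f(3) by simp
  qed
  define S where "S = f 0"
  define u where "u = rest Bl (T \<union> S) v"
  define t where "t j = rest Bl (f (Suc j)) v" for j
  have ST: "S \<inter> T = {}" using fsub[of 0] unfolding S_def by auto
  have vdec: "v = u + (\<Sum>j<k. t j)"
  proof -
    have "(\<Sum>j<k. t j) = rest Bl (\<Union>j<k. f (Suc j)) v"
      unfolding t_def by (rule rest_sum) (use f(4) in auto)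
    also have "\<dots> = rest Bl (-T - S) v" using tl(3) unfolding S_def by simp
    finally have "u + (\<Sum>j<k. t j) = rest Bl ((T \<union> S) \<union> (-T - S)) v"
      unfolding u_def by (subst rest_add[symmetric]) auto
    also have "(T \<union> S) \<union> (-T - S) = UNIV" by auto
    finally show ?thesis by (simp add: rest_UNIV)
  qed
  have Av: "A *v v = A *v u + (\<Sum>j<k. A *v t j)"
    by (subst vdec) (simp add: matrix_vector_right_distrib linear_sum[OF matrix_vector_mul_linear])
  have usz: "wsupp_size Bl w u \<le> 2 * s"
  proof -
    have "om w (T \<union> S) \<le> om w T + om w S" by (rule om_union)
    then show ?thesis using wsupp_rest[of "T \<union> S" v] T f(2)[rule_format, of 0] unfolding u_def S_def by linarith
  qed
  note ru = rip_inf[OF rip usz, folded \<delta>_def]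
  have Au: "norm (A *v u) \<le> sqrt (1 + \<delta>) * norm u"
  proof (rule power2_le_imp_le)
    show "(norm (A *v u))^2 \<le> (sqrt (1 + \<delta>) * norm u)^2" using ru d0 by (simp add: power_mult_distrib)
    show "0 \<le> sqrt (1 + \<delta>) * norm u" using d0 by simp
  qed
  have uT: "u = rest Bl T v + rest Bl S v" unfolding u_def using ST by (simp add: rest_add Int_commute)
  have un: "(norm u)^2 = (norm (rest Bl T v))^2 + (norm (rest Bl S v))^2"
    unfolding u_def norm_rest_sq using ST by (simp add: sum.union_disjoint Int_commute)
  have sq2: "norm (rest Bl T v) + norm (rest Bl S v) \<le> sqrt 2 * norm u"
  proof (rule power2_le_imp_le)
    have "0 \<le> (norm (rest Bl T v) - norm (rest Bl S v))^2" by simp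
    then have "(norm (rest Bl T v) + norm (rest Bl S v))^2 \<le> 2 * ((norm (rest Bl T v))^2 + (norm (rest Bl S v))^2)"
      by (simp add: power2_eq_square algebra_simps)
    then show "(norm (rest Bl T v) + norm (rest Bl S v))^2 \<le> (sqrt 2 * norm u)^2"
      using un by (simp add: power_mult_distrib)
  qed simp
  have ib: "\<bar>inner (A *v u) (A *v t j)\<bar> \<le> \<delta> * (sqrt 2 * norm u) * norm (t j)" if "j < k" for j
  proof -
    have dT: "T \<inter> f (Suc j) = {}" using fsub[of "Suc j"] by auto
    have dS: "S \<inter> f (Suc j) = {}" using f(4) unfolding S_def by auto
    have o1: "om w (T \<union> f (Suc j)) \<le> 2 * s" using om_union[of T "f (Suc j)"] T f(2)[rule_format, of "Suc j"] by linarith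
    have o2: "om w (S \<union> f (Suc j)) \<le> 2 * s" using om_union[of S "f (Suc j)"] f(2)[rule_format, of "Suc j"] f(2)[rule_format, of 0] unfolding S_def by linarith
    note i1 = inner_bound[OF rip dT o1, of v v, folded \<delta>_def t_def]
    note i2 = inner_bound[OF rip dS o2, of v v, folded \<delta>_def t_def]
    have "inner (A *v u) (A *v t j) = inner (A *v rest Bl T v) (A *v t j) + inner (A *v rest Bl S v) (A *v t j)"
      unfolding uT by (simp add: matrix_vector_right_distrib inner_add_left)
    then have "\<bar>inner (A *v u) (A *v t j)\<bar> \<le> \<bar>inner (A *v rest Bl T v) (A *v t j)\<bar> + \<bar>inner (A *v rest Bl S v) (A *v t j)\<bar>"
      by simp
    also have "\<dots> \<le> \<delta> * norm (rest Bl T v) * norm (t j) + \<delta> * norm (rest Bl S v) * norm (t j)"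
      using i1 i2 unfolding t_def by (rule add_mono)
    also have "\<dots> = \<delta> * (norm (rest Bl T v) + norm (rest Bl S v)) * norm (t j)" by (simp add: algebra_simps)
    finally have "\<bar>inner (A *v u) (A *v t j)\<bar> \<le> \<delta> * (norm (rest Bl T v) + norm (rest Bl S v)) * norm (t j)" .
    also have "\<dots> \<le> \<delta> * (sqrt 2 * norm u) * norm (t j)"
      using sq2 d0 by (intro mult_right_mono mult_left_mono) auto
    finally show ?thesis .
  qed
  have "(1 - \<delta>) * (norm u)^2 \<le> (norm (A *v u))^2" using ru by simp
  also have "(norm (A *v u))^2 = inner (A *v u) (A *v v) - (\<Sum>j<k. inner (A *v u) (A *v t j))"
    unfolding Av by (simp add: inner_add_right inner_sum_right power2_norm_eq_inner)
  also have "\<dots> \<le> norm (A *v u) * norm (A *v v) + (\<Sum>j<k. \<delta> * (sqrt 2 * norm u) * norm (t j))"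
  proof -
    have "inner (A *v u) (A *v v) \<le> norm (A *v u) * norm (A *v v)" by (rule norm_cauchy_schwarz)
    moreover have "- (\<Sum>j<k. inner (A *v u) (A *v t j)) \<le> (\<Sum>j<k. \<delta> * (sqrt 2 * norm u) * norm (t j))"
    proof -
      have "- (\<Sum>j<k. inner (A *v u) (A *v t j)) = (\<Sum>j<k. - inner (A *v u) (A *v t j))" by (simp add: sum_negf)
      also have "\<dots> \<le> (\<Sum>j<k. \<delta> * (sqrt 2 * norm u) * norm (t j))"
        by (rule sum_mono) (use ib in \<open>auto simp: abs_le_iff\<close>)
      finally show ?thesis .
    qed
    ultimately show ?thesis by linarith
  qed
  also have "\<dots> \<le> sqrt (1 + \<delta>) * norm u * norm (A *v v) + \<delta> * sqrt 2 * norm u * (sqrt 2 * L / sqrt s)"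
  proof -
    have "norm (A *v u) * norm (A *v v) \<le> sqrt (1 + \<delta>) * norm u * norm (A *v v)"
      using Au by (simp add: mult_right_mono)
    moreover have "(\<Sum>j<k. \<delta> * (sqrt 2 * norm u) * norm (t j)) = \<delta> * sqrt 2 * norm u * (\<Sum>j<k. norm (t j))"
      by (simp add: sum_distrib_left mult.assoc)
    moreover have "\<delta> * sqrt 2 * norm u * (\<Sum>j<k. norm (t j)) \<le> \<delta> * sqrt 2 * norm u * (sqrt 2 * L / sqrt s)"
      using tl(1) d0 unfolding t_def by (intro mult_left_mono) auto
    ultimately show ?thesis by linarith
  qed
  also have "\<dots> = norm u * (sqrt (1 + \<delta>) * norm (A *v v) + 2 * \<delta> * L / sqrt s)"
    by (simp add: algebra_simps)
  finally have key: "(1 - \<delta>) * (norm u)^2 \<le> norm u * (sqrt (1 + \<delta>) * norm (A *v v) + 2 * \<delta> * L / sqrt s)" .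
  have main: "(1 - \<delta>) * norm u \<le> sqrt (1 + \<delta>) * norm (A *v v) + 2 * \<delta> * L / sqrt s"
  proof (cases "norm u = 0")
    case True
    have "L \<ge> 0" unfolding L_def by (rule P_nonneg)
    then show ?thesis using True d0 s2 by simp
  next
    case False
    then have "norm u > 0" by simp
    have "((1 - \<delta>) * norm u) * norm u \<le> (sqrt (1 + \<delta>) * norm (A *v v) + 2 * \<delta> * L / sqrt s) * norm u"
      using key by (simp add: power2_eq_square algebra_simps)
    then show ?thesis using \<open>norm u > 0\<close> by (simp only: mult_le_cancel_right_pos)
  qed
  show ?thesis
    by (rule exI[of _ S]) (use ST main tl(2) in \<open>simp add: u_def S_def\<close>)
qed

end

lemma ineq_C1: fixes d q :: real assumes q2: "q*q = 2" and ql: "14142/10000 \<le> q" and qh: "q \<le> 14143/10000" and d0: "0 \<le> d" and dh: "d \<le> 27/100"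
  shows "(1+d) * ((1-d)*(1-d*(2*q+1))) \<le> (1+d*(2*q-3))^2 * (1-3*d)"
proof -
  have id0: "(1+d*(2*q-3))^2 * (1-3*d) - (1+d) * ((1-d)*(1-d*(2*q+1))) = d * ((6*q-8) + (36-24*q)*d + (34*q-52)*d^2) + 4*d^2*(1-3*d)*(q*q-2)"
    by (simp add: algebra_simps power2_eq_square power3_eq_cube)
  have id: "(1+d*(2*q-3))^2 * (1-3*d) - (1+d) * ((1-d)*(1-d*(2*q+1))) = d * ((6*q-8) + (36-24*q)*d + (34*q-52)*d^2)"
    using id0 q2 by simp
  have h1: "(36-24*q)*d \<ge> 0" using qh d0 by simp
  have dd: "d^2 \<le> 729/10000" using power_mono[OF dh d0, of 2] by (simp add: power2_eq_square)
  have h2: "(34*q-52)*d^2 \<ge> -4*d^2" using ql by (intro mult_right_mono) auto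
  have "(6*q-8) + (36-24*q)*d + (34*q-52)*d^2 \<ge> 0" using h1 h2 dd ql by linarith
  then have "d * ((6*q-8) + (36-24*q)*d + (34*q-52)*d^2) \<ge> 0" using d0 by simp
  then show ?thesis using id by linarith
qed

lemma ineq_D1: fixes d q :: real assumes q2: "q*q = 2" and ql: "14142/10000 \<le> q" and qh: "q \<le> 14143/10000" and d0: "0 \<le> d" and dh: "d \<le> 27/100"
  shows "2*((1-d)*(1-d*(2*q+1))) \<le> (3+d*(2*q-3))*(1-3*d)"
proof -
  have id: "(3+d*(2*q-3))*(1-3*d) - 2*((1-d)*(1-d*(2*q+1))) = 1 + (6*q-8)*d + (7-10*q)*d^2"
    by (simp add: algebra_simps power2_eq_square power3_eq_cube)
  have h1: "(6*q-8)*d \<ge> 0" using ql d0 by simp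
  have dd: "d^2 \<le> 729/10000" using power_mono[OF dh d0, of 2] by (simp add: power2_eq_square)
  have h2: "(7-10*q)*d^2 \<ge> -8*d^2" using qh by (intro mult_right_mono) auto
  show ?thesis using id h1 h2 dd by linarith
qed

lemma ineq_C2: fixes d q :: real assumes q2: "q*q = 2" and ql: "14142/10000 \<le> q" and qh: "q \<le> 14143/10000" and d0: "0 \<le> d" and dh: "d \<le> 27/100"
  shows "(4*d*(1+q/2) + q*(1-3*d)) * ((1-d)*(1-d*(2*q+1))) \<le> 2*(1+d*(2*q-3))^2*(1-3*d)"
proof -
  have id0: "2*(1+d*(2*q-3))^2*(1-3*d) - (4*d*(1+q/2) + q*(1-3*d)) * ((1-d)*(1-d*(2*q+1)))
     = (2-q) + (11*q-18)*d + (70-43*q)*d^2 + (65*q-102)*d^3 + (q*q-2)*(2*d+4*d^2-22*d^3)"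
    by (simp add: algebra_simps power2_eq_square power3_eq_cube)
  have id: "2*(1+d*(2*q-3))^2*(1-3*d) - (4*d*(1+q/2) + q*(1-3*d)) * ((1-d)*(1-d*(2*q+1)))
     = (2-q) + (11*q-18)*d + (70-43*q)*d^2 + (65*q-102)*d^3"
    using id0 q2 by simp
  have h1: "(11*q-18)*d \<ge> (-24438/10000)*d" using ql d0 by (intro mult_right_mono) auto
  have h2: "(70-43*q)*d^2 \<ge> (91851/10000)*d^2" using qh by (intro mult_right_mono) auto
  have h3: "(65*q-102)*d^3 \<ge> (-10077/1000)*d^3" using ql d0 by (intro mult_right_mono) auto
  have d3: "d^3 \<le> 27/100 * d^2"
  proof -
    have "d^3 = d * d^2" by (simp add: power3_eq_cube power2_eq_square)
    also have "\<dots> \<le> 27/100 * d^2" using dh by (intro mult_right_mono) auto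
    finally show ?thesis .
  qed
  have sq: "0 \<le> (d - 19/100)^2" by simp
  then have sq': "0 \<le> d^2 - 38/100*d + 361/10000" by (simp add: power2_eq_square algebra_simps)
  have "0 \<le> (2-q) + (11*q-18)*d + (70-43*q)*d^2 + (65*q-102)*d^3"
    using h1 h2 h3 d3 sq' qh d0 by linarith
  then show ?thesis using id by linarith
qed

lemma ineq_D2: fixes d q :: real assumes q2: "q*q = 2" and ql: "14142/10000 \<le> q" and qh: "q \<le> 14143/10000" and d0: "0 \<le> d" and dh: "d \<le> 27/100"
  shows "(2+q)*((1-d)*(1-d*(2*q+1))) \<le> 2*(3+d*(2*q-3))*(1-3*d)"
proof -
  have id0: "2*(3+d*(2*q-3))*(1-3*d) - (2+q)*((1-d)*(1-d*(2*q+1)))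
     = (4-q) + (10*q-16)*d + (12-17*q)*d^2 + (q*q-2)*(2*d-2*d^2)"
    by (simp add: algebra_simps power2_eq_square power3_eq_cube)
  have id: "2*(3+d*(2*q-3))*(1-3*d) - (2+q)*((1-d)*(1-d*(2*q+1))) = (4-q) + (10*q-16)*d + (12-17*q)*d^2"
    using id0 q2 by simp
  have h1: "(10*q-16)*d \<ge> -2*d" using ql d0 by (intro mult_right_mono) auto
  have dd: "d^2 \<le> 729/10000" using power_mono[OF dh d0, of 2] by (simp add: power2_eq_square)
  have h2: "(12-17*q)*d^2 \<ge> -13*d^2" using qh by (intro mult_right_mono) auto
  show ?thesis using id h1 h2 dd qh dh by linarith
qed

lemma arith_final:
  fixes \<delta> q r E \<eta> \<sigma> N U L Wv nv :: real
  assumes q2: "q*q = 2" and ql: "14142/10000 \<le> q" and qh: "q \<le> 14143/10000"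
    and d0: "0 \<le> \<delta>" and dlt: "\<delta> * (2*q+1) < 1" and r0: "r > 0"
    and E0: "0 \<le> E" and E2: "E \<le> 2*\<eta>" and s0: "0 \<le> \<sigma>" and N0: "0 \<le> N" and L0: "0 \<le> L"
    and h1: "(1-\<delta>)*N \<le> sqrt(1+\<delta>)*E + 2*\<delta>*L/r"
    and h2: "L \<le> r*N + 2*\<sigma>"
    and h3: "U \<le> L/(q*r)"
    and h4: "nv \<le> N + U"
    and h5: "Wv \<le> r*N + L"
  defines "c \<equiv> 2 * (1 + \<delta> * (2 * q - 3))^2 / ((1 - \<delta>) * (1 - \<delta> * (2 * q + 1)))"
    and "d \<equiv> 2 * (3 + \<delta> * (2 * q - 3)) * sqrt (1 + \<delta>) / ((1 - \<delta>) * (1 - \<delta> * (2 * q + 1)))"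
  shows "Wv \<le> c*\<sigma> + d*r*\<eta> \<and> nv \<le> c/r*\<sigma> + d*\<eta>"
proof -
  have q0: "q > 0" using ql by simp
  have dh: "\<delta> \<le> 27/100"
  proof (rule ccontr)
    assume "\<not> \<delta> \<le> 27/100"
    then have "\<delta> * (2*q+1) \<ge> 27/100 * (2*q+1)" using ql by (intro mult_right_mono) auto
    moreover have "27/100 * (2*q+1) > 1" using ql by simp
    ultimately show False using dlt by linarith
  qed
  define g where "g = 1 - 3*\<delta>"
  have g0: "g > 0" unfolding g_def using dh by simp
  define Den where "Den = (1 - \<delta>) * (1 - \<delta> * (2 * q + 1))"
  have Den0: "Den > 0" unfolding Den_def using dh dlt by (intro mult_pos_pos) auto
  define sq where "sq = sqrt (1+\<delta>)"
  have sq0: "sq > 0" unfolding sq_def using d0 by simp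
  have a1: "2*\<delta>*L/r \<le> 2*\<delta>*N + 4*\<delta>*\<sigma>/r"
  proof -
    have "2*\<delta>*L \<le> 2*\<delta>*(r*N + 2*\<sigma>)" using h2 d0 by (intro mult_left_mono) auto
    then have "2*\<delta>*L/r \<le> 2*\<delta>*(r*N + 2*\<sigma>)/r" using r0 by (intro divide_right_mono) auto
    also have "\<dots> = 2*\<delta>*N + 4*\<delta>*\<sigma>/r" using r0 by (simp add: field_simps)
    finally show ?thesis .
  qed
  have gN: "g*N \<le> sq*E + 4*\<delta>*\<sigma>/r"
  proof -
    have "(1-\<delta>)*N \<le> sq*E + 2*\<delta>*N + 4*\<delta>*\<sigma>/r" using h1 a1 unfolding sq_def by linarith
    then show ?thesis unfolding g_def by (simp add: algebra_simps)
  qed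
  define Nb where "Nb = (sq*E + 4*\<delta>*\<sigma>/r)/g"
  have NNb: "N \<le> Nb" unfolding Nb_def using gN g0 by (simp add: le_divide_eq mult.commute)
  have sqE: "sq*E \<le> 2* sq*\<eta>" using E2 sq0 by simp
  have W1: "Wv \<le> 2*(1+\<delta>)/g*\<sigma> + 4* sq/g*r*\<eta>"
  proof -
    have w1: "Wv \<le> 2*r*N + 2*\<sigma>" using h5 h2 by linarith
    have w2: "2*r*N \<le> 2*r*Nb" using NNb r0 by simp
    have w3: "2*r*Nb = 2*r* sq*E/g + 8*\<delta>*\<sigma>/g" unfolding Nb_def using r0 g0 by (simp add: field_simps)
    have w4: "2*r* sq*E/g \<le> 4* sq/g*r*\<eta>"
    proof -
      have "2*r* sq*E \<le> 2*r*(2* sq*\<eta>)" using mult_left_mono[OF sqE, of "2*r"] r0 by (simp add: mult.assoc)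
      then show ?thesis using g0 by (simp add: divide_right_mono field_simps)
    qed
    have w5: "8*\<delta>*\<sigma>/g + 2*\<sigma> = 2*(1+\<delta>)/g*\<sigma>" using g0 unfolding g_def by (simp add: field_simps)
    show ?thesis using w1 w2 w3 w4 w5 by linarith
  qed
  have c1: "2*(1+\<delta>)/g \<le> c"
  proof -
    have "(1+\<delta>) * Den \<le> (1+\<delta>*(2*q-3))^2 * g"
      unfolding Den_def g_def by (rule ineq_C1[OF q2 ql qh d0 dh])
    then show ?thesis unfolding c_def Den_def[symmetric] using Den0 g0 by (simp add: field_simps)
  qed
  have d1: "4* sq/g \<le> d"
  proof -
    have i: "2*Den \<le> (3+\<delta>*(2*q-3))*g"
      unfolding Den_def g_def by (rule ineq_D1[OF q2 ql qh d0 dh])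
    have "4* sq*Den \<le> 2*(3+\<delta>*(2*q-3))* sq*g" using mult_right_mono[OF i, of "2* sq"] sq0 by (simp add: algebra_simps)
    then show ?thesis unfolding d_def Den_def[symmetric] sq_def[symmetric] using Den0 g0 by (simp add: field_simps)
  qed
  have part1: "Wv \<le> c*\<sigma> + d*r*\<eta>"
  proof -
    have e0: "\<eta> \<ge> 0" using E0 E2 by simp
    have "2*(1+\<delta>)/g*\<sigma> \<le> c*\<sigma>" using c1 s0 by (rule mult_right_mono)
    moreover have "4* sq/g*r*\<eta> \<le> d*r*\<eta>" using d1 r0 e0 by (intro mult_right_mono) auto
    ultimately show ?thesis using W1 by linarith
  qed
  have U1: "U \<le> N/q + 2*\<sigma>/(q*r)"
  proof -
    have "L/(q*r) \<le> (r*N + 2*\<sigma>)/(q*r)" using h2 q0 r0 by (intro divide_right_mono) auto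
    also have "\<dots> = N/q + 2*\<sigma>/(q*r)" using q0 r0 by (simp add: field_simps)
    finally show ?thesis using h3 by linarith
  qed
  have qi: "1/q = q/2" "2/q = q" using q2 q0 by (simp_all add: field_simps)
  have n1: "nv \<le> (1 + q/2)*N + q*\<sigma>/r"
  proof -
    have "nv \<le> N + N/q + 2*\<sigma>/(q*r)" using h4 U1 by linarith
    also have "N/q = q/2*N" using qi by (metis divide_inverse inverse_eq_divide mult.commute times_divide_eq_left mult_1)
    also have "2*\<sigma>/(q*r) = q*\<sigma>/r" using qi q0 r0 by (simp add: field_simps)
    finally show ?thesis by (simp add: algebra_simps)
  qed
  have n2: "nv \<le> ((4*\<delta>*(1+q/2) + q*g)/g) * (\<sigma>/r) + ((2+q)* sq/g)*\<eta>"
  proof -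
    have "(1 + q/2)*N \<le> (1 + q/2)*Nb" using NNb q0 by (intro mult_left_mono) auto
    also have "(1 + q/2)*Nb = (1+q/2)* sq*E/g + (4*\<delta>*(1+q/2)/g)*(\<sigma>/r)"
      unfolding Nb_def using g0 r0 by (simp add: field_simps)
    also have "(1+q/2)* sq*E/g \<le> ((2+q)* sq/g)*\<eta>"
    proof -
      have "(1+q/2)* sq*E \<le> (1+q/2)*(2* sq*\<eta>)" using mult_left_mono[OF sqE, of "1+q/2"] q0 by (simp add: mult.assoc)
      also have "(1+q/2)*(2* sq*\<eta>) = (2+q)* sq*\<eta>" by (simp add: algebra_simps)
      finally have "(1+q/2)* sq*E/g \<le> (2+q)* sq*\<eta>/g" using g0 by (intro divide_right_mono) auto
      then show ?thesis by simp
    qed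
    finally have "(1 + q/2)*N \<le> ((2+q)* sq/g)*\<eta> + (4*\<delta>*(1+q/2)/g)*(\<sigma>/r)" by simp
    moreover have "q*\<sigma>/r = (q*g/g)*(\<sigma>/r)" using g0 by simp
    moreover have "(4*\<delta>*(1+q/2)/g)*(\<sigma>/r) + (q*g/g)*(\<sigma>/r) = ((4*\<delta>*(1+q/2) + q*g)/g) * (\<sigma>/r)"
      by (simp add: add_divide_distrib distrib_right)
    ultimately show ?thesis using n1 by linarith
  qed
  have c2: "(4*\<delta>*(1+q/2) + q*g)/g \<le> c"
  proof -
    have "(4*\<delta>*(1+q/2) + q*g) * Den \<le> 2*(1+\<delta>*(2*q-3))^2*g"
      unfolding Den_def g_def by (rule ineq_C2[OF q2 ql qh d0 dh])
    then show ?thesis unfolding c_def Den_def[symmetric] using Den0 g0 by (simp add: field_simps)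
  qed
  have d2: "(2+q)* sq/g \<le> d"
  proof -
    have i: "(2+q)*Den \<le> 2*(3+\<delta>*(2*q-3))*g"
      unfolding Den_def g_def by (rule ineq_D2[OF q2 ql qh d0 dh])
    have "(2+q)* sq*Den \<le> 2*(3+\<delta>*(2*q-3))* sq*g"
      using mult_right_mono[OF i, of "sq"] sq0 by (simp add: algebra_simps)
    then show ?thesis unfolding d_def Den_def[symmetric] sq_def[symmetric] using Den0 g0 by (simp add: field_simps)
  qed
  have part2: "nv \<le> c/r*\<sigma> + d*\<eta>"
  proof -
    have e0: "\<eta> \<ge> 0" using E0 E2 by simp
    have sr: "\<sigma>/r \<ge> 0" using s0 r0 by simp
    have "((4*\<delta>*(1+q/2) + q*g)/g) * (\<sigma>/r) \<le> c * (\<sigma>/r)" using c2 sr by (rule mult_right_mono)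
    moreover have "((2+q)* sq/g)*\<eta> \<le> d*\<eta>" using d2 e0 by (rule mult_right_mono)
    moreover have "c * (\<sigma>/r) = c/r*\<sigma>" by simp
    ultimately show ?thesis using n2 by linarith
  qed
  show ?thesis using part1 part2 by blast
qed

context blk begin

lemma split_T: fixes T :: "'b set" and f :: "'b \<Rightarrow> real"
  shows "(\<Sum>b\<in>UNIV. f b) = (\<Sum>b\<in>T. f b) + (\<Sum>b\<in>-T. f b)"
proof -
  have "(\<Sum>b\<in>T \<union> -T. f b) = (\<Sum>b\<in>T. f b) + (\<Sum>b\<in>-T. f b)" by (rule sum.union_disjoint) auto
  then show ?thesis by simp
qed

lemma wnorm21_minus: "wnorm21 Bl w (- v) = wnorm21 Bl w v"
  unfolding wnorm21_eq bn_minus ..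

lemma wnorm21_nonneg: "wnorm21 Bl w v \<ge> 0"
  unfolding wnorm21_eq by (rule P_nonneg)

lemma per_z:
  fixes A :: "real^'n^'m" and v x xh z :: "real^'n"
  assumes ws: "\<forall>b. (w b)^2 \<le> s/2" and rip: "wbrip Bl w A (2 * s)"
    and zs: "wsupp_size Bl w z \<le> s"
    and v: "v = xh - x" and cone: "wnorm21 Bl w xh \<le> wnorm21 Bl w x"
    and Ev: "norm (A *v v) \<le> 2*\<eta>"
    and q2: "q*q = 2" and ql: "14142/10000 \<le> q" and qh: "q \<le> 14143/10000"
    and dlt: "wbrip_const Bl w A (2 * s) * (2*q+1) < 1"
  defines "\<delta> \<equiv> wbrip_const Bl w A (2 * s)"
  defines "c \<equiv> 2 * (1 + \<delta> * (2 * q - 3))^2 / ((1 - \<delta>) * (1 - \<delta> * (2 * q + 1)))"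
    and "d \<equiv> 2 * (3 + \<delta> * (2 * q - 3)) * sqrt (1 + \<delta>) / ((1 - \<delta>) * (1 - \<delta> * (2 * q + 1)))"
  shows "wnorm21 Bl w v \<le> c * wnorm21 Bl w (x - z) + d * sqrt s * \<eta> \<and>
         norm v \<le> c / sqrt s * wnorm21 Bl w (x - z) + d * \<eta>"
proof -
  have s2: "s \<ge> 2" using s_ge2[OF ws] .
  define r where "r = sqrt s"
  have r0: "r > 0" unfolding r_def using s2 by simp
  have d0: "\<delta> \<ge> 0" unfolding \<delta>_def by (rule wbrip_const_nonneg[OF rip])
  define T where "T = {b. \<exists>i\<in>Bl b. z$i \<noteq> 0}"
  have Ts: "om w T \<le> s" using zs unfolding wsupp_size_def om_def T_def .
  define L where "L = (\<Sum>b\<in>-T. w b * block_norm Bl v b)"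
  obtain S where S: "S \<inter> T = {}"
    "(1 - \<delta>) * norm (rest Bl (T \<union> S) v) \<le> sqrt (1 + \<delta>) * norm (A *v v) + 2 * \<delta> * L / sqrt s"
    "(norm (rest Bl (-T - S) v))^2 \<le> L^2 / (2 * s)"
    using nsp[OF ws rip Ts, of v] unfolding \<delta>_def L_def by blast
  define N where "N = norm (rest Bl (T \<union> S) v)"
  define U where "U = norm (rest Bl (-T - S) v)"
  define V where "V = (\<Sum>b\<in>T. w b * block_norm Bl v b)"
  define X where "X = (\<Sum>b\<in>-T. w b * block_norm Bl x b)"
  define sz where "sz = wnorm21 Bl w (x - z)"
  have wp: "w b \<ge> 0" for b using wpos[of b] by simp
  have bx: "block_norm Bl x b \<le> block_norm Bl xh b + block_norm Bl v b" for b
  proof -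
    have "x = xh + (- v)" using v by simp
    then show ?thesis using bn_triangle[of xh "- v" b] bn_minus[of v b] by simp
  qed
  have bv: "block_norm Bl v b \<le> block_norm Bl xh b + block_norm Bl x b" for b
  proof -
    have "v = xh + (- x)" using v by simp
    then show ?thesis using bn_triangle[of xh "- x" b] bn_minus[of x b] by simp
  qed
  have c1: "(\<Sum>b\<in>T. w b * block_norm Bl x b) \<le> (\<Sum>b\<in>T. w b * block_norm Bl xh b) + V"
  proof -
    have "(\<Sum>b\<in>T. w b * block_norm Bl x b) \<le> (\<Sum>b\<in>T. w b * block_norm Bl xh b + w b * block_norm Bl v b)"
      by (rule sum_mono) (use bx wp in \<open>simp add: distrib_left[symmetric] mult_left_mono\<close>)
    then show ?thesis unfolding V_def sum.distrib .
  qed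
  have c2: "L \<le> (\<Sum>b\<in>-T. w b * block_norm Bl xh b) + X"
  proof -
    have "L \<le> (\<Sum>b\<in>-T. w b * block_norm Bl xh b + w b * block_norm Bl x b)" unfolding L_def
      by (rule sum_mono) (use bv wp in \<open>simp add: distrib_left[symmetric] mult_left_mono\<close>)
    then show ?thesis unfolding X_def sum.distrib .
  qed
  have cone': "(\<Sum>b\<in>T. w b * block_norm Bl xh b) + (\<Sum>b\<in>-T. w b * block_norm Bl xh b)
      \<le> (\<Sum>b\<in>T. w b * block_norm Bl x b) + X"
    using cone unfolding wnorm21_eq split_T[where T=T] X_def .
  have LVX: "L \<le> V + 2*X" using c1 c2 cone' by linarith
  have Xs: "X \<le> sz"
  proof -
    have eq: "block_norm Bl (x - z) b = block_norm Bl x b" if "b \<in> -T" for b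
    proof -
      have "\<forall>i\<in>Bl b. z$i = 0" using that unfolding T_def by auto
      then show ?thesis unfolding block_norm_def by (intro arg_cong[where f=sqrt] sum.cong) auto
    qed
    have "sz = (\<Sum>b\<in>T. w b * block_norm Bl (x - z) b) + (\<Sum>b\<in>-T. w b * block_norm Bl (x - z) b)"
      unfolding sz_def wnorm21_eq split_T[where T=T] ..
    also have "(\<Sum>b\<in>-T. w b * block_norm Bl (x - z) b) = X" unfolding X_def by (rule sum.cong) (auto simp: eq)
    finally show ?thesis using P_nonneg[where X=T and v="x - z"] by linarith
  qed
  have VN: "V \<le> r * N"
  proof -
    have "V = (\<Sum>b\<in>T. \<bar>w b\<bar> * \<bar>block_norm Bl v b\<bar>)" unfolding V_def
      using wp bn_nonneg by simp
    also have "\<dots> \<le> L2_set w T * L2_set (block_norm Bl v) T" by (rule L2_set_mult_ineq)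
    also have "\<dots> \<le> r * N"
    proof (rule mult_mono)
      show "L2_set w T \<le> r" unfolding L2_set_def r_def using Ts unfolding om_def by simp
      have "(\<Sum>b\<in>T. (block_norm Bl v b)^2) \<le> (\<Sum>b\<in>T \<union> S. (block_norm Bl v b)^2)"
        by (rule sum_mono2) auto
      also have "\<dots> = N^2" unfolding N_def norm_rest_sq ..
      finally show "L2_set (block_norm Bl v) T \<le> N" unfolding L2_set_def N_def
        by (simp add: real_le_lsqrt)
      show "0 \<le> r" using r0 by simp
      show "0 \<le> L2_set (block_norm Bl v) T" by (simp add: L2_set_def sum_nonneg)
    qed
    finally show ?thesis .
  qed
  have h2: "L \<le> r * N + 2 * sz" using LVX Xs VN by linarith
  have L0: "L \<ge> 0" unfolding L_def by (rule P_nonneg)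
  have h3: "U \<le> L / (q * r)"
  proof (rule power2_le_imp_le)
    have "(q*r)^2 = (q*q) * (r*r)" by (simp add: power2_eq_square algebra_simps)
    also have "r*r = s" unfolding r_def using s2 by simp
    finally have "(q*r)^2 = 2 * s" using q2 by simp
    then show "U^2 \<le> (L / (q * r))^2" using S(3) unfolding U_def by (simp add: power_divide)
    show "0 \<le> L / (q * r)" using L0 ql r0 by simp
  qed
  have h4: "norm v \<le> N + U"
  proof -
    have "rest Bl (T \<union> S) v + rest Bl (-T - S) v = rest Bl ((T \<union> S) \<union> (-T - S)) v"
      by (rule rest_add) auto
    also have "(T \<union> S) \<union> (-T - S) = UNIV" by auto
    finally have "v = rest Bl (T \<union> S) v + rest Bl (-T - S) v" by (simp add: rest_UNIV)
    then have "norm v = norm (rest Bl (T \<union> S) v + rest Bl (-T - S) v)" by simp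
    also have "\<dots> \<le> N + U" unfolding N_def U_def by (rule norm_triangle_ineq)
    finally show ?thesis .
  qed
  have h5: "wnorm21 Bl w v \<le> r * N + L"
    using VN unfolding wnorm21_eq split_T[where T=T] V_def L_def by linarith
  have h1: "(1 - \<delta>) * N \<le> sqrt (1 + \<delta>) * norm (A *v v) + 2 * \<delta> * L / r"
    using S(2) unfolding N_def r_def .
  have sz0: "sz \<ge> 0" unfolding sz_def by (rule wnorm21_nonneg)
  have N0: "N \<ge> 0" unfolding N_def by simp
  have E0: "norm (A *v v) \<ge> 0" by simp
  have dlt': "\<delta> * (2*q+1) < 1" using dlt unfolding \<delta>_def .
  note af = arith_final[OF q2 ql qh d0 dlt' r0 E0 Ev sz0 N0 L0 h1 h2 h3 h4 h5]
  show ?thesis using af unfolding c_def d_def sz_def r_def by simp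
qed

end

theorem mainTheorem7:
  fixes A :: "real^'n::finite^'m::finite"
    and Bl :: "'b::finite \<Rightarrow> 'n set" and w :: "'b \<Rightarrow> real"
    and s \<eta> :: real and x xh :: "real^'n" and e y :: "real^'m"
  assumes "block_structure Bl"
    and "\<forall>b. w b \<ge> 1"
    and "s \<ge> 2 * (winf w)^2"
    and "wbrip Bl w A (2 * s)"
    and "wbrip_const Bl w A (2 * s) < 1 / (2 * sqrt 2 + 1)"
    and "y = A *v x + e" and "norm e \<le> \<eta>"
    and "norm (A *v xh - y) \<le> \<eta>"
    and "\<forall>z. norm (A *v z - y) \<le> \<eta> \<longrightarrow> wnorm21 Bl w xh \<le> wnorm21 Bl w z"
  shows "let \<delta> = wbrip_const Bl w A (2 * s);
             c = 2 * (1 + \<delta> * (2 * sqrt 2 - 3))^2 / ((1 - \<delta>) * (1 - \<delta> * (2 * sqrt 2 + 1)));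
             d = 2 * (3 + \<delta> * (2 * sqrt 2 - 3)) * sqrt (1 + \<delta>) / ((1 - \<delta>) * (1 - \<delta> * (2 * sqrt 2 + 1)))
         in wnorm21 Bl w (x - xh) \<le> c * sigma_w Bl w s x + d * sqrt s * \<eta>
          \<and> norm (x - xh) \<le> c / sqrt s * sigma_w Bl w s x + d * \<eta>"
proof -
  interpret blk Bl w using assms(1,2) by unfold_locales
  define \<delta> where "\<delta> = wbrip_const Bl w A (2 * s)"
  define q where "q = sqrt 2"
  have q2: "q*q = 2" unfolding q_def by simp
  have ql: "14142/10000 \<le> q" unfolding q_def by (rule real_le_rsqrt) (simp add: power2_eq_square)
  have qh: "q \<le> 14143/10000" unfolding q_def by (rule real_le_lsqrt) (simp_all add: power2_eq_square)
  have ws: "\<forall>b. (w b)^2 \<le> s/2"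
  proof
    fix b
    have "w b \<le> winf w" unfolding winf_def by (rule Max_ge) auto
    moreover have "0 \<le> w b" using wpos[of b] by simp
    ultimately have "(w b)^2 \<le> (winf w)^2" by (intro power_mono) auto
    then show "(w b)^2 \<le> s/2" using assms(3) by simp
  qed
  have s2: "s \<ge> 2" by (rule s_ge2[OF ws])
  have r0: "sqrt s > 0" using s2 by simp
  have d0: "\<delta> \<ge> 0" unfolding \<delta>_def by (rule wbrip_const_nonneg[OF assms(4)])
  have dlt: "wbrip_const Bl w A (2 * s) * (2*q+1) < 1"
  proof -
    have "2*q+1 > 0" using ql by simp
    then show ?thesis using assms(5) unfolding q_def[symmetric] by (simp add: less_divide_eq)
  qed
  have dh: "\<delta> \<le> 27/100"
  proof (rule ccontr)
    assume "\<not> \<delta> \<le> 27/100"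
    then have "\<delta> * (2*q+1) \<ge> 27/100 * (2*q+1)" using ql by (intro mult_right_mono) auto
    moreover have "27/100 * (2*q+1) > 1" using ql by simp
    ultimately show False using dlt unfolding \<delta>_def by linarith
  qed
  define v where "v = xh - x"
  have Ev: "norm (A *v v) \<le> 2*\<eta>"
  proof -
    have "A *v v = (A *v xh - y) + e" unfolding v_def assms(6) by (simp add: matrix_vector_mult_diff_distrib)
    then have "norm (A *v v) \<le> norm (A *v xh - y) + norm e" by (simp add: norm_triangle_ineq)
    then show ?thesis using assms(7,8) by linarith
  qed
  have cone: "wnorm21 Bl w xh \<le> wnorm21 Bl w x"
  proof -
    have "A *v x - y = - e" unfolding assms(6) by simp
    then have "norm (A *v x - y) \<le> \<eta>" using assms(7) by simp
    then show ?thesis using assms(9) by blast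
  qed
  define c where "c = 2 * (1 + \<delta> * (2 * q - 3))^2 / ((1 - \<delta>) * (1 - \<delta> * (2 * q + 1)))"
  define d where "d = 2 * (3 + \<delta> * (2 * q - 3)) * sqrt (1 + \<delta>) / ((1 - \<delta>) * (1 - \<delta> * (2 * q + 1)))"
  have key: "wnorm21 Bl w v \<le> c * wnorm21 Bl w (x - z) + d * sqrt s * \<eta> \<and>
         norm v \<le> c / sqrt s * wnorm21 Bl w (x - z) + d * \<eta>" if "wsupp_size Bl w z \<le> s" for z
    using per_z[OF ws assms(4) that v_def cone Ev q2 ql qh dlt] unfolding c_def d_def \<delta>_def .
  have c0: "c > 0"
  proof -
    have "\<delta> * (2*q+1) < 1" using dlt unfolding \<delta>_def .
    then have Den: "(1 - \<delta>) * (1 - \<delta> * (2 * q + 1)) > 0" using dh by (intro mult_pos_pos) auto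
    have "\<delta> * (2 * q - 3) \<ge> 27/100 * (-1)"
    proof -
      have "2*q - 3 \<ge> -1" using ql by simp
      then have "\<delta> * (2 * q - 3) \<ge> \<delta> * (-1)" using d0 by (intro mult_left_mono) auto
      then show ?thesis using dh by linarith
    qed
    then have "1 + \<delta> * (2 * q - 3) > 0" by linarith
    then show ?thesis unfolding c_def using Den by simp
  qed
  define SS where "SS = {wnorm21 Bl w (x - z) | z. wsupp_size Bl w z \<le> s}"
  have sig: "sigma_w Bl w s x = Inf SS" unfolding sigma_w_def SS_def ..
  have z0: "wsupp_size Bl w 0 \<le> s" unfolding wsupp_size_def using s2 by simp
  have SSne: "SS \<noteq> {}" unfolding SS_def using z0 by blast
  have l1: "(wnorm21 Bl w v - d * sqrt s * \<eta>) / c \<le> Inf SS"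
  proof (rule cInf_greatest[OF SSne])
    fix t assume "t \<in> SS"
    then obtain z where z: "wsupp_size Bl w z \<le> s" "t = wnorm21 Bl w (x - z)" unfolding SS_def by blast
    then show "(wnorm21 Bl w v - d * sqrt s * \<eta>) / c \<le> t" using key[OF z(1)] c0
      by (simp add: divide_le_eq mult.commute)
  qed
  have l2: "(norm v - d * \<eta>) * sqrt s / c \<le> Inf SS"
  proof (rule cInf_greatest[OF SSne])
    fix t assume "t \<in> SS"
    then obtain z where z: "wsupp_size Bl w z \<le> s" "t = wnorm21 Bl w (x - z)" unfolding SS_def by blast
    have "norm v - d * \<eta> \<le> c / sqrt s * t" using key[OF z(1)] z(2) by simp
    then have "(norm v - d * \<eta>) * sqrt s \<le> c * t" using r0 by (simp add: field_simps)
    then show "(norm v - d * \<eta>) * sqrt s / c \<le> t" using c0 by (simp add: divide_le_eq mult.commute)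
  qed
  have f1: "wnorm21 Bl w v \<le> c * Inf SS + d * sqrt s * \<eta>" using l1 c0 by (simp add: divide_le_eq mult.commute)
  have f2: "norm v \<le> c / sqrt s * Inf SS + d * \<eta>"
  proof -
    have "(norm v - d * \<eta>) * sqrt s \<le> c * Inf SS" using l2 c0 by (simp add: divide_le_eq mult.commute)
    then have "norm v - d * \<eta> \<le> c * Inf SS / sqrt s" using r0 by (simp add: le_divide_eq)
    then show ?thesis by simp
  qed
  have xv: "x - xh = - v" unfolding v_def by simp
  show ?thesis
    unfolding Let_def xv wnorm21_minus norm_minus_cancel sig
    using f1 f2 unfolding c_def d_def \<delta>_def q_def by simp
qed

end
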